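(* Let $\mathcal{A}$ be any algorithm in the $\mathsf{LOCAL}$ model that solves the distributed spanning tree reconfiguration problem in one step of $1$-simultaneous add and delete, i.e., for every connected graph $G=(V,E)$ and every pair of spanning trees $T_1, T_2$ of $G$ (given as input as described in the context), $\mathcal{A}$ outputs a valid single-step $1$-simultaneous add and delete reconfiguration schedule from $T_1$ to $T_2$. Then $\mathcal{A}$ requires $\Omega(n)$ rounds in the worst case, where $n$ is the number of nodes of the graph.
   Context: The $\mathsf{LOCAL}$ model: the communication network is an $n$-node graph $G$ whose nodes have unique identifiers; computation proceeds in synchronous rounds, in each of which every node may send a message of arbitrary size to each of its neighbours in $G$ and perform arbitrary local computation; the running time is the number of rounds. Distributed spanning tree reconfiguration problem: given a connected graph $G=(V,E)$ (which is the communication network) and two spanning trees $T_1,T_2$ of $G$, each node $v\in V$ initially knows only its own incident edges in $T_1$ and in $T_2$ (the trees are unrooted: no parent pointers are given). A $k$-simultaneous add and delete step applied to a spanning tree $T$ consists of each node $v$ choosing a set $A_v$ of at most $k$ edges incident to $v$ to add and a set $D_v$ of at most $k$ edges incident to $v$ (in $T$) to delete, such that no edge belongs to $A_u$ and $A_w$ for two different nodes $u\ne w$ and no edge belongs to $D_u$ and $D_w$ for two different nodes $u\neq w$; the result is $(T\setminus \bigcup_v D_v)\cup \bigcup_v A_v$. A valid single-step $k$-simultaneous add and delete reconfiguration schedule from $T_1$ to $T_2$ is one such step applied to $T_1$ whose result is exactly $T_2$; the algorithm must output it distributedly, i.e., each node $v$ outputs its own sets $A_v$ and $D_v$. *)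

theory Defs
  imports Main "HOL-Library.Landau_Symbols"
begin

text \<open>Nodes are natural numbers; a node's name is its unique identifier.
  An (undirected) edge is a two-element set of nodes.\<close>

definition adj :: "nat set set \<Rightarrow> nat \<Rightarrow> nat \<Rightarrow> bool" where
  "adj F u v \<longleftrightarrow> u \<noteq> v \<and> {u, v} \<in> F"

definition connected_on :: "nat set \<Rightarrow> nat set set \<Rightarrow> bool" where
  "connected_on V F \<longleftrightarrow> (\<forall>u\<in>V. \<forall>v\<in>V. (adj F)\<^sup>*\<^sup>* u v)"

definition is_graph :: "nat set \<Rightarrow> nat set set \<Rightarrow> bool" where
  "is_graph V E \<longleftrightarrow> finite V \<and> (\<forall>e\<in>E. e \<subseteq> V \<and> card e = 2)"

definition acyclic_edges :: "nat set set \<Rightarrow> bool" where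
  "acyclic_edges F \<longleftrightarrow> (\<forall>u v. {u, v} \<in> F \<and> u \<noteq> v \<longrightarrow> \<not> (adj (F - {{u, v}}))\<^sup>*\<^sup>* u v)"

definition spanning_tree :: "nat set \<Rightarrow> nat set set \<Rightarrow> nat set set \<Rightarrow> bool" where
  "spanning_tree V E T \<longleftrightarrow> T \<subseteq> E \<and> connected_on V T \<and> acyclic_edges T"

definition valid_instance :: "nat set \<Rightarrow> nat set set \<Rightarrow> nat set set \<Rightarrow> nat set set \<Rightarrow> bool" where
  "valid_instance V E T1 T2 \<longleftrightarrow> is_graph V E \<and> connected_on V E
     \<and> spanning_tree V E T1 \<and> spanning_tree V E T2"

definition incident :: "nat \<Rightarrow> nat set set \<Rightarrow> nat set set" where
  "incident v F = {e \<in> F. v \<in> e}"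

text \<open>A valid single-step k-simultaneous add and delete schedule: node v outputs
  out v = (A_v, D_v).\<close>
definition valid_schedule ::
  "nat \<Rightarrow> nat set \<Rightarrow> nat set set \<Rightarrow> nat set set \<Rightarrow> nat set set
     \<Rightarrow> (nat \<Rightarrow> nat set set \<times> nat set set) \<Rightarrow> bool" where
  "valid_schedule k V E T1 T2 out \<longleftrightarrow>
     (\<forall>v\<in>V. fst (out v) \<subseteq> incident v E \<and> card (fst (out v)) \<le> k
           \<and> snd (out v) \<subseteq> incident v T1 \<and> card (snd (out v)) \<le> k)
   \<and> (\<forall>u\<in>V. \<forall>w\<in>V. u \<noteq> w \<longrightarrow> fst (out u) \<inter> fst (out w) = {} \<and> snd (out u) \<inter> snd (out w) = {})
   \<and> (T1 - (\<Union>v\<in>V. snd (out v))) \<union> (\<Union>v\<in>V. fst (out v)) = T2"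

definition ball :: "nat set set \<Rightarrow> nat \<Rightarrow> nat \<Rightarrow> nat set" where
  "ball E r v = {u. \<exists>k\<le>r. (adj E ^^ k) v u}"

definition touching :: "nat set \<Rightarrow> nat set set \<Rightarrow> nat set set" where
  "touching B F = {e \<in> F. e \<inter> B \<noteq> {}}"

text \<open>It runs in r(n) rounds in the LOCAL model if, on n-node instances, the output of v
  depends only on what v can learn in r(n) rounds: the nodes (identifiers) within distance
  r(n) and all edges of G, T1, T2 incident to them (each node initially knows its incident
  edges). Knowledge of n is granted to the algorithm for free.\<close>
definition local_algorithm ::
  "(nat set \<Rightarrow> nat set set \<Rightarrow> nat set set \<Rightarrow> nat set set \<Rightarrow> nat \<Rightarrow> nat set set \<times> nat set set)
     \<Rightarrow> (nat \<Rightarrow> nat) \<Rightarrow> bool" where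
  "local_algorithm alg r \<longleftrightarrow>
     (\<forall>V E T1 T2 V' E' T1' T2' v.
        valid_instance V E T1 T2 \<and> valid_instance V' E' T1' T2'
        \<and> card V = card V' \<and> v \<in> V \<and> v \<in> V'
        \<and> ball E (r (card V)) v = ball E' (r (card V)) v
        \<and> touching (ball E (r (card V)) v) E = touching (ball E (r (card V)) v) E'
        \<and> touching (ball E (r (card V)) v) T1 = touching (ball E (r (card V)) v) T1'
        \<and> touching (ball E (r (card V)) v) T2 = touching (ball E (r (card V)) v) T2'
        \<longrightarrow> alg V E T1 T2 v = alg V' E' T1' T2' v)"

end

theory Submission
  imports Defs
begin


definition P1 :: "(nat \<Rightarrow> nat) \<Rightarrow> nat \<Rightarrow> nat set set" where
  "P1 p n = {{p a, p (Suc a)} | a. Suc a < n}"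
definition P2 :: "(nat \<Rightarrow> nat) \<Rightarrow> nat \<Rightarrow> nat set set" where
  "P2 p n = {{p a, p (a+2)} | a. a+2 < n}"
definition TT1 :: "(nat \<Rightarrow> nat) \<Rightarrow> nat \<Rightarrow> nat set set" where
  "TT1 p n = P2 p n \<union> {{p 0, p 1}}"
definition EE :: "(nat \<Rightarrow> nat) \<Rightarrow> nat \<Rightarrow> nat set set" where
  "EE p n = P1 p n \<union> P2 p n"

lemma adj_sym: "adj F u v \<Longrightarrow> adj F v u"
  by (auto simp: adj_def insert_commute)

lemma rtc_sym: "(adj F)\<^sup>*\<^sup>* u v \<Longrightarrow> (adj F)\<^sup>*\<^sup>* v u"
proof (induction rule: rtranclp_induct)
  case base then show ?case by simp
next
  case (step y z) then show ?case by (meson adj_sym converse_rtranclp_into_rtranclp)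
qed

lemma rtc_mono: "(adj F)\<^sup>*\<^sup>* u v \<Longrightarrow> F \<subseteq> G \<Longrightarrow> (adj G)\<^sup>*\<^sup>* u v"
proof (induction rule: rtranclp_induct)
  case base then show ?case by simp
next
  case (step y z) then show ?case
    by (metis adj_def rtranclp.rtrancl_into_rtrancl subsetD)
qed

lemma cut_lemma:
  assumes "\<forall>x y. adj F x y \<longrightarrow> (x \<in> S \<longleftrightarrow> y \<in> S)" "(adj F)\<^sup>*\<^sup>* u v"
  shows "u \<in> S \<longleftrightarrow> v \<in> S"
  using assms(2) by (induction rule: rtranclp_induct) (use assms(1) in auto)

lemma mem_img:
  assumes "inj_on p {..<n}" "D \<subseteq> {..<n}" "c < n"
  shows "p c \<in> p ` D \<longleftrightarrow> c \<in> D"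
  using assms by (auto simp: inj_on_def)

lemma injD': "inj_on p {..<n} \<Longrightarrow> x < n \<Longrightarrow> y < n \<Longrightarrow> p x = p y \<Longrightarrow> x = y"
  by (auto simp: inj_on_def)

lemma conn0:
  assumes "inj_on p {..<n}" "a < n"
  shows "(adj (P1 p n))\<^sup>*\<^sup>* (p 0) (p a)"
  using assms(2)
proof (induction a)
  case 0 then show ?case by simp
next
  case (Suc a)
  have "p a \<noteq> p (Suc a)" using injD'[OF assms(1), of a "Suc a"] Suc.prems by auto
  moreover have "{p a, p (Suc a)} \<in> P1 p n" using Suc.prems by (auto simp: P1_def)
  ultimately have "adj (P1 p n) (p a) (p (Suc a))" by (simp add: adj_def)
  with Suc show ?case by (meson Suc_lessD rtranclp.rtrancl_into_rtrancl)
qed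

lemma conn1:
  assumes "inj_on p {..<n}" "a < n" "2 \<le> n"
  shows "(adj (TT1 p n))\<^sup>*\<^sup>* (p 0) (p a)"
  using assms(2)
proof (induction a rule: less_induct)
  case (less a)
  show ?case
  proof (cases "a < 2")
    case True
    then consider "a = 0" | "a = 1" by linarith
    then show ?thesis
    proof cases
      case 1 then show ?thesis by simp
    next
      case 2
      have "p 0 \<noteq> p 1" using injD'[OF assms(1), of 0 1] assms(3) by auto
      then have "adj (TT1 p n) (p 0) (p 1)" by (simp add: adj_def TT1_def)
      then show ?thesis using 2 by auto
    qed
  next
    case False
    then obtain b where b: "a = b + 2" by (metis add.commute le_Suc_ex not_less)
    have "p b \<noteq> p a" using injD'[OF assms(1), of b a] less.prems b by auto
    moreover have "{p b, p a} \<in> TT1 p n" using less.prems b by (auto simp: TT1_def P2_def)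
    ultimately have "adj (TT1 p n) (p b) (p a)" by (simp add: adj_def)
    moreover have "(adj (TT1 p n))\<^sup>*\<^sup>* (p 0) (p b)" using less b by auto
    ultimately show ?thesis by (meson rtranclp.rtrancl_into_rtrancl)
  qed
qed

lemma conn_on:
  assumes "bij_betw p {..<n} {..<n}" "\<And>a. a < n \<Longrightarrow> (adj F)\<^sup>*\<^sup>* (p 0) (p a)"
  shows "connected_on {..<n} F"
  unfolding connected_on_def
proof (intro ballI)
  fix u v assume "u \<in> {..<n}" "v \<in> {..<n}"
  then obtain a b where "a < n" "b < n" "u = p a" "v = p b"
    using assms(1) by (metis bij_betw_imp_surj_on imageE lessThan_iff)
  then show "(adj F)\<^sup>*\<^sup>* u v" using assms(2) rtc_sym by (meson rtranclp_trans)
qed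



lemma acyc_P1:
  assumes "inj_on p {..<n}"
  shows "acyclic_edges (P1 p n)"
  unfolding acyclic_edges_def
proof (intro allI impI)
  fix u v assume uv: "{u, v} \<in> P1 p n \<and> u \<noteq> v"
  then obtain a where a: "Suc a < n" "{u,v} = {p a, p (Suc a)}" by (auto simp: P1_def)
  define S where "S = p ` {..a}"
  have mS: "c < n \<Longrightarrow> p c \<in> S \<longleftrightarrow> c \<le> a" for c
  proof -
    have "{..a} \<subseteq> {..<n}" using a(1) by auto
    then show ?thesis if "c < n" unfolding S_def using mem_img[OF assms, of "{..a}" c] that by auto
  qed
  have cl: "\<forall>x y. adj (P1 p n - {{u,v}}) x y \<longrightarrow> (x \<in> S \<longleftrightarrow> y \<in> S)"
  proof (intro allI impI)
    fix x y assume "adj (P1 p n - {{u,v}}) x y"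
    then have m: "{x,y} \<in> P1 p n" "{x,y} \<noteq> {u,v}" by (auto simp: adj_def)
    then obtain b where b: "Suc b < n" "{x,y} = {p b, p (Suc b)}"
      unfolding P1_def by blast
    then have "b \<noteq> a" using a m(2) by auto
    then have "p b \<in> S \<longleftrightarrow> p (Suc b) \<in> S" using mS b(1) by auto
    then show "x \<in> S \<longleftrightarrow> y \<in> S" using b(2) by (auto simp: doubleton_eq_iff)
  qed
  have "p a \<in> S" "p (Suc a) \<notin> S" using mS a(1) by auto
  then have "(u \<in> S) \<noteq> (v \<in> S)" using a(2) by (auto simp: doubleton_eq_iff)
  then show "\<not> (adj (P1 p n - {{u, v}}))\<^sup>*\<^sup>* u v" using cut_lemma[OF cl] by blast
qed

lemma acyc_TT1:
  assumes "inj_on p {..<n}" "2 \<le> n"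
  shows "acyclic_edges (TT1 p n)"
  unfolding acyclic_edges_def
proof (intro allI impI)
  fix u v assume uv: "{u, v} \<in> TT1 p n \<and> u \<noteq> v"
  have iff: "x < n \<Longrightarrow> y < n \<Longrightarrow> p x = p y \<longleftrightarrow> x = y" for x y using injD'[OF assms(1)] by auto
  show "\<not> (adj (TT1 p n - {{u, v}}))\<^sup>*\<^sup>* u v"
  proof (cases "{u,v} = {p 0, p 1}")
    case True
    define S where "S = p ` {c. c < n \<and> even c}"
    have mS: "c < n \<Longrightarrow> p c \<in> S \<longleftrightarrow> even c" for c
      unfolding S_def using mem_img[OF assms(1), of "{c. c < n \<and> even c}" c] by auto
    have cl: "\<forall>x y. adj (TT1 p n - {{u,v}}) x y \<longrightarrow> (x \<in> S \<longleftrightarrow> y \<in> S)"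
    proof (intro allI impI)
      fix x y assume "adj (TT1 p n - {{u,v}}) x y"
      then obtain b where b: "b + 2 < n" "{x,y} = {p b, p (b+2)}"
        using True by (auto simp: adj_def TT1_def P2_def)
      then have "p b \<in> S \<longleftrightarrow> p (b+2) \<in> S" using mS by auto
      then show "x \<in> S \<longleftrightarrow> y \<in> S" using b(2) by (auto simp: doubleton_eq_iff)
    qed
    have "p 0 \<in> S" "p 1 \<notin> S" using mS assms(2) by auto
    then have "(u \<in> S) \<noteq> (v \<in> S)" using True by (auto simp: doubleton_eq_iff)
    then show ?thesis using cut_lemma[OF cl] by blast
  next
    case False
    then obtain a where a: "a + 2 < n" "{u,v} = {p a, p (a+2)}" using uv by (auto simp: TT1_def P2_def)
    define S where "S = p ` {c. c < n \<and> a + 2 \<le> c \<and> even (c + a)}"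
    have mS: "c < n \<Longrightarrow> p c \<in> S \<longleftrightarrow> a + 2 \<le> c \<and> even (c + a)" for c
      unfolding S_def using mem_img[OF assms(1), of "{c. c < n \<and> a + 2 \<le> c \<and> even (c + a)}" c] by auto
    have cl: "\<forall>x y. adj (TT1 p n - {{u,v}}) x y \<longrightarrow> (x \<in> S \<longleftrightarrow> y \<in> S)"
    proof (intro allI impI)
      fix x y assume xy: "adj (TT1 p n - {{u,v}}) x y"
      show "x \<in> S \<longleftrightarrow> y \<in> S"
      proof (cases "{x,y} = {p 0, p 1}")
        case True
        have "p 0 \<notin> S" "p 1 \<notin> S" using mS assms(2) by auto
        then show ?thesis using True by (auto simp: doubleton_eq_iff)
      next
        case False
        have m: "{x,y} \<in> P2 p n" "{x,y} \<noteq> {u,v}" using xy False by (auto simp: adj_def TT1_def)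
        then obtain b where b: "b + 2 < n" "{x,y} = {p b, p (b+2)}"
          unfolding P2_def by blast
        then have "b \<noteq> a" using a m(2) by auto
        then have "a + 2 \<le> b \<and> even (b + a) \<longleftrightarrow> a + 2 \<le> b + 2 \<and> even (b + 2 + a)" by presburger
        then have "p b \<in> S \<longleftrightarrow> p (b+2) \<in> S" using mS b(1) by auto
        then show ?thesis using b(2) by (auto simp: doubleton_eq_iff)
      qed
    qed
    have "p a \<notin> S" "p (a+2) \<in> S" using mS a(1) by auto
    then have "(u \<in> S) \<noteq> (v \<in> S)" using a(2) by (auto simp: doubleton_eq_iff)
    then show ?thesis using cut_lemma[OF cl] by blast
  qed
qed

lemma valid_inst:
  assumes "bij_betw p {..<n} {..<n}" "2 \<le> n"
  shows "valid_instance {..<n} (EE p n) (TT1 p n) (P1 p n)"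
proof -
  have inj: "inj_on p {..<n}" using assms(1) bij_betw_imp_inj_on by blast
  have rng: "a < n \<Longrightarrow> p a < n" for a using assms(1) by (meson bij_betwE lessThan_iff)
  have neq: "a < n \<Longrightarrow> b < n \<Longrightarrow> a \<noteq> b \<Longrightarrow> p a \<noteq> p b" for a b using injD'[OF inj] by blast
  have g: "is_graph {..<n} (EE p n)"
    unfolding is_graph_def EE_def P1_def P2_def
    using rng neq by fastforce
  have s1: "P1 p n \<subseteq> EE p n" by (auto simp: EE_def)
  have s2: "TT1 p n \<subseteq> EE p n" using assms(2) by (force simp: EE_def TT1_def P1_def)
  have c1: "connected_on {..<n} (P1 p n)" using conn_on[OF assms(1)] conn0[OF inj] by blast
  have c2: "connected_on {..<n} (TT1 p n)" using conn_on[OF assms(1)] conn1[OF inj _ assms(2)] by blast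
  have c3: "connected_on {..<n} (EE p n)" using c1 s1 rtc_mono unfolding connected_on_def by blast
  show ?thesis unfolding valid_instance_def spanning_tree_def
    using g s1 s2 c1 c2 c3 acyc_P1[OF inj] acyc_TT1[OF inj assms(2)] by blast
qed



lemma owner:
  assumes "bij_betw p {..<n} {..<n}" "2 \<le> n"
    "valid_schedule 1 {..<n} (EE p n) (TT1 p n) (P1 p n) out"
    "1 \<le> k" "Suc k < n"
  shows "\<exists>q. (q = k \<or> q = Suc k) \<and> {p k, p (Suc k)} \<in> fst (out (p q))"
proof -
  have inj: "inj_on p {..<n}" using assms(1) bij_betw_imp_inj_on by blast
  have iff: "x < n \<Longrightarrow> y < n \<Longrightarrow> p x = p y \<longleftrightarrow> x = y" for x y using injD'[OF inj] by auto
  have inP1: "{p k, p (Suc k)} \<in> P1 p n" using assms(5) by (auto simp: P1_def)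
  have nP2: "{p k, p (Suc k)} \<notin> P2 p n"
  proof
    assume "{p k, p (Suc k)} \<in> P2 p n"
    then obtain b where "b + 2 < n" "{p k, p (Suc k)} = {p b, p (b+2)}" unfolding P2_def by blast
    then show False using iff assms(5) by (auto simp: doubleton_eq_iff)
  qed
  have n01: "{p k, p (Suc k)} \<noteq> {p 0, p 1}"
    using iff assms(2,4,5) by (auto simp: doubleton_eq_iff)
  have "{p k, p (Suc k)} \<notin> TT1 p n" using nP2 n01 by (auto simp: TT1_def)
  then have "{p k, p (Suc k)} \<in> (\<Union>v\<in>{..<n}. fst (out v))"
    using assms(3) inP1 unfolding valid_schedule_def by blast
  then obtain v where v: "v < n" "{p k, p (Suc k)} \<in> fst (out v)" by auto
  then have "v \<in> {p k, p (Suc k)}" using assms(3) unfolding valid_schedule_def incident_def by blast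
  then show ?thesis using v by auto
qed



lemma core:
  assumes bij: "bij_betw p {..<n} {..<n}" and n2: "2 \<le> n"
    and vs: "valid_schedule 1 {..<n} (EE p n) (TT1 p n) (P1 p n) out"
    and ij: "1 \<le> i" "i < j" "Suc j < n"
    and oi: "{p i, p (Suc i)} \<in> fst (out (p (Suc i)))"
    and oj: "{p j, p (Suc j)} \<in> fst (out (p j))"
  shows False
proof -
  have inj: "inj_on p {..<n}" using assms(1) bij_betw_imp_inj_on by blast
  have iff: "x < n \<Longrightarrow> y < n \<Longrightarrow> p x = p y \<longleftrightarrow> x = y" for x y using injD'[OF inj] by auto
  have rng: "a < n \<Longrightarrow> p a < n" for a using assms(1) by (meson bij_betwE lessThan_iff)
  have "\<forall>k\<in>{i..j}. \<exists>q. (q = k \<or> q = Suc k) \<and> {p k, p (Suc k)} \<in> fst (out (p q))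
          \<and> (k = i \<longrightarrow> q = Suc i) \<and> (k = j \<longrightarrow> q = j)"
  proof
    fix k assume k: "k \<in> {i..j}"
    show "\<exists>q. (q = k \<or> q = Suc k) \<and> {p k, p (Suc k)} \<in> fst (out (p q))
          \<and> (k = i \<longrightarrow> q = Suc i) \<and> (k = j \<longrightarrow> q = j)"
    proof (cases "k = i")
      case True then show ?thesis using oi ij by auto
    next
      case False
      show ?thesis
      proof (cases "k = j")
        case True then show ?thesis using oj ij by auto
      next
        case False2: False
        obtain q where "(q = k \<or> q = Suc k) \<and> {p k, p (Suc k)} \<in> fst (out (p q))"
          using owner[OF bij n2 vs, of k] k ij by auto
        then show ?thesis using False False2 by auto
      qed
    qed
  qed
  from bchoice[OF this] obtain g where g: "\<forall>k\<in>{i..j}. (g k = k \<or> g k = Suc k) \<and> {p k, p (Suc k)} \<in> fst (out (p (g k)))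
          \<and> (k = i \<longrightarrow> g k = Suc i) \<and> (k = j \<longrightarrow> g k = j)"
    by blast
  have img: "g ` {i..j} \<subseteq> {Suc i..j}"
  proof
    fix x assume "x \<in> g ` {i..j}"
    then obtain k where k: "k \<in> {i..j}" "x = g k" by auto
    have gk: "g k = k \<or> g k = Suc k" "k = i \<longrightarrow> g k = Suc i" "k = j \<longrightarrow> g k = j"
      using g k(1) by blast+
    have "i \<le> k" "k \<le> j" using k(1) by auto
    show "x \<in> {Suc i..j}"
    proof (cases "k = i")
      case True then show ?thesis using gk k(2) ij by simp
    next
      case F1: False
      show ?thesis
      proof (cases "k = j")
        case True then show ?thesis using gk k(2) ij by simp
      next
        case False
        then have "i < k" "k < j" using F1 \<open>i \<le> k\<close> \<open>k \<le> j\<close> by auto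
        then show ?thesis using gk(1) k(2) by auto
      qed
    qed
  qed
  have finE: "finite (EE p n)"
  proof (rule finite_subset)
    show "EE p n \<subseteq> Pow {..<n}" using valid_inst[OF bij n2]
      unfolding valid_instance_def is_graph_def by blast
  qed auto
  have injg: "inj_on g {i..j}"
  proof (rule inj_onI)
    fix k1 k2 assume k: "k1 \<in> {i..j}" "k2 \<in> {i..j}" "g k1 = g k2"
    let ?q = "g k1"
    have "?q \<in> {Suc i..j}" using img k(1) by blast
    then have qn: "?q < n" using ij by auto
    have A: "fst (out (p ?q)) \<subseteq> EE p n" "card (fst (out (p ?q))) \<le> 1"
      using vs rng[OF qn] unfolding valid_schedule_def incident_def by auto
    have fin: "finite (fst (out (p ?q)))" using A(1) finE finite_subset by blast
    have "{p k1, p (Suc k1)} \<in> fst (out (p ?q))" "{p k2, p (Suc k2)} \<in> fst (out (p ?q))"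
      using g k by metis+
    then have eq: "{p k1, p (Suc k1)} = {p k2, p (Suc k2)}"
      using A(2) card_le_Suc0_iff_eq[OF fin] by simp
    have "k1 < n" "Suc k1 < n" "k2 < n" "Suc k2 < n" using k ij by auto
    then have "p k1 \<noteq> p (Suc k2) \<or> p (Suc k1) \<noteq> p k2" "p k1 = p k2 \<longleftrightarrow> k1 = k2"
      using iff by auto
    then show "k1 = k2" using eq by (auto simp: doubleton_eq_iff)
  qed
  have "card {i..j} \<le> card {Suc i..j}" using card_inj_on_le[OF injg img] by simp
  then show False using ij by simp
qed



definition perm :: "nat \<Rightarrow> bool \<Rightarrow> bool \<Rightarrow> nat \<Rightarrow> nat" where
  "perm h s t a = (if a < h then (if s then h - 1 - a else a)
     else if a < 2*h then (if t then 3*h - 1 - a else a) else a)"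

definition intr :: "nat \<Rightarrow> nat \<Rightarrow> bool" where
  "intr h u \<longleftrightarrow> (2 \<le> u \<and> u + 3 \<le> h) \<or> (h + 2 \<le> u \<and> u + 3 \<le> 2*h)"

lemma perm_bij: "2*h \<le> n \<Longrightarrow> bij_betw (perm h s t) {..<n} {..<n}"
  by (rule bij_betw_byWitness[where f'="perm h s t"]) (auto simp: perm_def)

lemma P1_mem:
  assumes "2*h \<le> n" "Suc x < h \<or> (h \<le> x \<and> Suc x < 2*h)"
  shows "{x, Suc x} \<in> P1 (perm h s t) n"
proof -
  have "\<exists>a. Suc a < n \<and> {x, Suc x} = {perm h s t a, perm h s t (Suc a)}"
  proof (cases "Suc x < h")
    case True
    show ?thesis
    proof (cases s)
      case True
      then show ?thesis using \<open>Suc x < h\<close> assms(1)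
        by (intro exI[of _ "h - 2 - x"]) (auto simp: perm_def doubleton_eq_iff)
    next
      case False
      then show ?thesis using \<open>Suc x < h\<close> assms(1)
        by (intro exI[of _ x]) (auto simp: perm_def doubleton_eq_iff)
    qed
  next
    case False
    then have x: "h \<le> x" "Suc x < 2*h" using assms(2) by auto
    show ?thesis
    proof (cases t)
      case True
      then show ?thesis using x assms(1)
        by (intro exI[of _ "3*h - 2 - x"]) (auto simp: perm_def doubleton_eq_iff)
    next
      case False
      then show ?thesis using x assms(1)
        by (intro exI[of _ x]) (auto simp: perm_def doubleton_eq_iff)
    qed
  qed
  then show ?thesis unfolding P1_def by blast
qed

lemma P2_mem:
  assumes "2*h \<le> n" "x + 2 < h \<or> (h \<le> x \<and> x + 2 < 2*h)"
  shows "{x, x + 2} \<in> P2 (perm h s t) n"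
proof -
  have "\<exists>a. a + 2 < n \<and> {x, x + 2} = {perm h s t a, perm h s t (a + 2)}"
  proof (cases "x + 2 < h")
    case True
    show ?thesis
    proof (cases s)
      case True
      then show ?thesis using \<open>x + 2 < h\<close> assms(1)
        by (intro exI[of _ "h - 3 - x"]) (auto simp: perm_def doubleton_eq_iff)
    next
      case False
      then show ?thesis using \<open>x + 2 < h\<close> assms(1)
        by (intro exI[of _ x]) (auto simp: perm_def doubleton_eq_iff)
    qed
  next
    case False
    then have x: "h \<le> x" "x + 2 < 2*h" using assms(2) by auto
    show ?thesis
    proof (cases t)
      case True
      then show ?thesis using x assms(1)
        by (intro exI[of _ "3*h - 3 - x"]) (auto simp: perm_def doubleton_eq_iff)
    next
      case False
      then show ?thesis using x assms(1)
        by (intro exI[of _ x]) (auto simp: perm_def doubleton_eq_iff)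
    qed
  qed
  then show ?thesis unfolding P2_def by blast
qed

lemma nbr1:
  assumes "2*h \<le> n" "intr h u"
  shows "{u, w} \<in> P1 (perm h s t) n \<longleftrightarrow> (w = Suc u \<or> u = Suc w)"
proof
  assume "{u, w} \<in> P1 (perm h s t) n"
  then obtain a where a: "Suc a < n" "{u, w} = {perm h s t a, perm h s t (Suc a)}"
    unfolding P1_def by blast
  then consider "u = perm h s t a" "w = perm h s t (Suc a)" | "w = perm h s t a" "u = perm h s t (Suc a)"
    by (auto simp: doubleton_eq_iff)
  then show "w = Suc u \<or> u = Suc w"
    using assms a(1) unfolding intr_def perm_def by cases (auto split: if_splits)
next
  assume "w = Suc u \<or> u = Suc w"
  then show "{u, w} \<in> P1 (perm h s t) n"
  proof
    assume "w = Suc u" then show ?thesis using P1_mem[OF assms(1)] assms(2) by (auto simp: intr_def)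
  next
    assume "u = Suc w" then show ?thesis using P1_mem[OF assms(1), of w s t] assms(2)
      by (auto simp: intr_def insert_commute)
  qed
qed

lemma nbr2:
  assumes "2*h \<le> n" "intr h u"
  shows "{u, w} \<in> P2 (perm h s t) n \<longleftrightarrow> (w = u + 2 \<or> u = w + 2)"
proof
  assume "{u, w} \<in> P2 (perm h s t) n"
  then obtain a where a: "a + 2 < n" "{u, w} = {perm h s t a, perm h s t (a + 2)}"
    unfolding P2_def by blast
  then consider "u = perm h s t a" "w = perm h s t (a + 2)" | "w = perm h s t a" "u = perm h s t (a + 2)"
    by (auto simp: doubleton_eq_iff)
  then show "w = u + 2 \<or> u = w + 2"
    using assms a(1) unfolding intr_def perm_def by cases (auto split: if_splits)
next
  assume "w = u + 2 \<or> u = w + 2"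
  then show "{u, w} \<in> P2 (perm h s t) n"
  proof
    assume "w = u + 2" then show ?thesis using P2_mem[OF assms(1)] assms(2) by (auto simp: intr_def)
  next
    assume "u = w + 2" then show ?thesis using P2_mem[OF assms(1), of w s t] assms(2)
      by (auto simp: intr_def insert_commute)
  qed
qed

lemma n01: "intr h u \<Longrightarrow> u \<noteq> perm h s t 0 \<and> u \<noteq> perm h s t 1"
  by (auto simp: intr_def perm_def)

lemma nbrT1:
  assumes "2*h \<le> n" "intr h u"
  shows "{u, w} \<in> TT1 (perm h s t) n \<longleftrightarrow> (w = u + 2 \<or> u = w + 2)"
proof -
  have "{u, w} \<noteq> {perm h s t 0, perm h s t 1}" using n01[OF assms(2), of s t]
    by (auto simp: doubleton_eq_iff)
  then show ?thesis using nbr2[OF assms] by (auto simp: TT1_def)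
qed

lemma nbrE:
  assumes "2*h \<le> n" "intr h u"
  shows "{u, w} \<in> EE (perm h s t) n \<longleftrightarrow> (w = Suc u \<or> u = Suc w \<or> w = u + 2 \<or> u = w + 2)"
  using nbr1[OF assms] nbr2[OF assms] by (auto simp: EE_def)

lemma adjE:
  assumes "2*h \<le> n" "intr h u"
  shows "adj (EE (perm h s t) n) u w \<longleftrightarrow> (w = Suc u \<or> u = Suc w \<or> w = u + 2 \<or> u = w + 2)"
  using nbrE[OF assms] by (auto simp: adj_def)



lemma pow_agree:
  assumes "\<forall>w\<in>S. \<forall>u. adj F w u = adj G w u"
    and "\<forall>k u. k < R \<longrightarrow> (adj F ^^ k) v u \<longrightarrow> u \<in> S"
  shows "k \<le> R \<Longrightarrow> (adj F ^^ k) v u = (adj G ^^ k) v u"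
proof (induction k arbitrary: u)
  case 0 then show ?case by simp
next
  case (Suc k)
  have "(adj F ^^ Suc k) v u \<longleftrightarrow> (\<exists>w. (adj F ^^ k) v w \<and> adj F w u)" by auto
  also have "\<dots> \<longleftrightarrow> (\<exists>w. (adj G ^^ k) v w \<and> adj G w u)"
    using Suc assms by (metis Suc_le_lessD Suc_leD)
  also have "\<dots> \<longleftrightarrow> (adj G ^^ Suc k) v u" by auto
  finally show ?case .
qed

lemma bound:
  assumes "\<forall>w u. \<bar>int w - int v\<bar> \<le> 2 * int R \<longrightarrow> adj F w u \<longrightarrow> \<bar>int u - int w\<bar> \<le> 2"
  shows "k \<le> R \<Longrightarrow> (adj F ^^ k) v u \<Longrightarrow> \<bar>int u - int v\<bar> \<le> 2 * int k"
proof (induction k arbitrary: u)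
  case 0 then show ?case by simp
next
  case (Suc k)
  then obtain w where w: "(adj F ^^ k) v w" "adj F w u" by auto
  then have "\<bar>int w - int v\<bar> \<le> 2 * int k" using Suc by auto
  moreover then have "\<bar>int u - int w\<bar> \<le> 2" using assms w(2) Suc.prems(1) by force
  ultimately show ?case by simp
qed

lemma touch_eq:
  assumes "\<forall>e\<in>F. \<exists>x y. e = {x,y}" "\<forall>e\<in>G. \<exists>x y. e = {x,y}"
    "\<forall>u\<in>S. \<forall>w. ({u,w} \<in> F) = ({u,w} \<in> G)"
  shows "touching S F = touching S G"
proof -
  have *: "touching S F \<subseteq> touching S G" if t1: "\<forall>e\<in>F. \<exists>x y. e = {x,y}"
    and t2: "\<forall>u\<in>S. \<forall>w. ({u,w} \<in> F) = ({u,w} \<in> G)" for F G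
  proof
    fix e assume e: "e \<in> touching S F"
    then obtain x y where xy: "e = {x,y}" "e \<in> F" using t1 unfolding touching_def by blast
    have "x \<in> S \<or> y \<in> S" using e xy unfolding touching_def by auto
    then have "e \<in> G" using t2 xy by (metis insert_commute)
    then show "e \<in> touching S G" using e unfolding touching_def by auto
  qed
  show ?thesis using *[OF assms(1,3)] *[OF assms(2)] assms(3) by blast
qed

lemma touch_mono: "B \<subseteq> S \<Longrightarrow> touching S F = touching S G \<Longrightarrow> touching B F = touching B G"
  unfolding touching_def by blast

lemma dbl_P1: "\<forall>e\<in>P1 p n. \<exists>x y. e = {x,y}" by (auto simp: P1_def)
lemma dbl_TT1: "\<forall>e\<in>TT1 p n. \<exists>x y. e = {x,y}" by (auto simp: TT1_def P2_def)
lemma dbl_EE: "\<forall>e\<in>EE p n. \<exists>x y. e = {x,y}" by (auto simp: EE_def P1_def P2_def)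

lemma loc:
  assumes la: "local_algorithm alg r" and hn: "2*h \<le> n" "2 \<le> n"
    and win: "\<forall>x. \<bar>int x - int v\<bar> \<le> 2 * int (r n) \<longrightarrow> intr h x"
  shows "alg {..<n} (EE (perm h s t) n) (TT1 (perm h s t) n) (P1 (perm h s t) n) v
       = alg {..<n} (EE (perm h s' t') n) (TT1 (perm h s' t') n) (P1 (perm h s' t') n) v"
proof -
  let ?p = "perm h s t" and ?q = "perm h s' t'"
  define R where "R = r n"
  define S where "S = {x. \<bar>int x - int v\<bar> \<le> 2 * int R}"
  have cardV: "card {..<n} = n" by simp
  have intS: "x \<in> S \<Longrightarrow> intr h x" for x using win unfolding S_def R_def by auto
  have vS: "v \<in> S" unfolding S_def by simp
  have vn: "v \<in> {..<n}" using intS[OF vS] hn(1) by (auto simp: intr_def)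
  have adjeq: "\<forall>w\<in>S. \<forall>u. adj (EE ?p n) w u = adj (EE ?q n) w u"
    using adjE[OF hn(1) intS] by blast
  have H: "\<forall>w u. \<bar>int w - int v\<bar> \<le> 2 * int R \<longrightarrow> adj (EE ?p n) w u \<longrightarrow> \<bar>int u - int w\<bar> \<le> 2"
      using adjE[OF hn(1) intS] unfolding S_def by fastforce
  note bnd = bound[OF H]
  have inS: "k \<le> R \<Longrightarrow> (adj (EE ?p n) ^^ k) v u \<Longrightarrow> u \<in> S" for k u
    using bnd[of k u] unfolding S_def by auto
  have peq: "k \<le> R \<Longrightarrow> (adj (EE ?p n) ^^ k) v u = (adj (EE ?q n) ^^ k) v u" for k u
  proof -
    have "\<forall>k u. k < R \<longrightarrow> (adj (EE ?p n) ^^ k) v u \<longrightarrow> u \<in> S" using inS less_imp_le by blast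
    then show "k \<le> R \<Longrightarrow> ?thesis" using pow_agree[OF adjeq] by blast
  qed
  have ballEq: "ball (EE ?p n) R v = ball (EE ?q n) R v"
    unfolding ball_def using peq by blast
  have ballS: "ball (EE ?p n) R v \<subseteq> S" unfolding ball_def using inS by blast
  have tE: "touching S (EE ?p n) = touching S (EE ?q n)"
    by (rule touch_eq[OF dbl_EE dbl_EE]) (use nbrE[OF hn(1) intS] in blast)
  have tT1: "touching S (TT1 ?p n) = touching S (TT1 ?q n)"
    by (rule touch_eq[OF dbl_TT1 dbl_TT1]) (use nbrT1[OF hn(1) intS] in blast)
  have tT2: "touching S (P1 ?p n) = touching S (P1 ?q n)"
    by (rule touch_eq[OF dbl_P1 dbl_P1]) (use nbr1[OF hn(1) intS] in blast)
  show ?thesis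
    apply (rule la[unfolded local_algorithm_def, rule_format, of "{..<n}" "EE ?p n" "TT1 ?p n" "P1 ?p n"
      "{..<n}" "EE ?q n" "TT1 ?q n" "P1 ?q n" v])
    using valid_inst[OF perm_bij[OF hn(1)] hn(2)] vn ballEq
      touch_mono[OF ballS tE] touch_mono[OF ballS tT1] touch_mono[OF ballS tT2]
    unfolding cardV R_def by auto
qed



lemma winlem:
  assumes "h = 2*m + 2" "2 * R + 2 \<le> m" "v \<in> {m, Suc m, h + m, Suc (h + m)}"
  shows "\<forall>x. \<bar>int x - int v\<bar> \<le> 2 * int R \<longrightarrow> intr h x"
  using assms unfolding intr_def by (auto simp: abs_le_iff)

lemma key:
  assumes la: "local_algorithm alg r"
    and sched: "\<And>V E T1 T2. valid_instance V E T1 T2 \<Longrightarrow> valid_schedule 1 V E T1 T2 (alg V E T1 T2)"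
    and hm: "h = 2*m + 2" and hn: "2*h \<le> n" and rm: "2 * r n + 2 \<le> m"
  shows False
proof -
  have n2: "2 \<le> n" using hm hn by simp
  let ?p0 = "perm h False False"
  define out0 where "out0 = alg {..<n} (EE ?p0 n) (TT1 ?p0 n) (P1 ?p0 n)"
  have vs0: "valid_schedule 1 {..<n} (EE ?p0 n) (TT1 ?p0 n) (P1 ?p0 n) out0"
    unfolding out0_def by (rule sched[OF valid_inst[OF perm_bij[OF hn] n2]])
  have id0: "x < 2*h \<Longrightarrow> ?p0 x = x" for x by (simp add: perm_def)
  obtain q where q: "q = m \<or> q = Suc m" "{?p0 m, ?p0 (Suc m)} \<in> fst (out0 (?p0 q))"
    using owner[OF perm_bij[OF hn] n2 vs0, of m] hm hn rm by auto
  have q': "{m, Suc m} \<in> fst (out0 q)" using q id0 hm by auto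
  obtain q2 where q2: "q2 = h + m \<or> q2 = Suc (h + m)"
      "{?p0 (h+m), ?p0 (Suc (h+m))} \<in> fst (out0 (?p0 q2))"
    using owner[OF perm_bij[OF hn] n2 vs0, of "h+m"] hm hn rm by auto
  have q2': "{h + m, Suc (h + m)} \<in> fst (out0 q2)" using q2 id0 hm by auto
  define s where "s = (q = m)"
  define t where "t = (q2 = Suc (h + m))"
  let ?p = "perm h s t"
  define out where "out = alg {..<n} (EE ?p n) (TT1 ?p n) (P1 ?p n)"
  have vs: "valid_schedule 1 {..<n} (EE ?p n) (TT1 ?p n) (P1 ?p n) out"
    unfolding out_def by (rule sched[OF valid_inst[OF perm_bij[OF hn] n2]])
  have pq: "?p (Suc m) = q" "{?p m, ?p (Suc m)} = {m, Suc m}"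
    using q(1) hm unfolding s_def perm_def by auto
  have pq2: "?p (h + m) = q2" "{?p (h + m), ?p (Suc (h + m))} = {h + m, Suc (h + m)}"
    using q2(1) hm unfolding t_def perm_def by auto
  have lq: "out q = out0 q"
    unfolding out_def out0_def
    by (rule loc[OF la hn n2]) (use winlem[OF hm rm] q(1) in auto)
  have lq2: "out q2 = out0 q2"
    unfolding out_def out0_def
    by (rule loc[OF la hn n2]) (use winlem[OF hm rm] q2(1) in auto)
  show False
  proof (rule core[OF perm_bij[OF hn] n2 vs, of m "h + m"])
    show "1 \<le> m" "m < h + m" "Suc (h + m) < n" using hm hn rm by auto
    show "{?p m, ?p (Suc m)} \<in> fst (out (?p (Suc m)))" using pq lq q' by simp
    show "{?p (h + m), ?p (Suc (h + m))} \<in> fst (out (?p (h + m)))" using pq2 lq2 q2' by simp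
  qed
qed



theorem mainTheorem1:
  fixes alg :: "nat set \<Rightarrow> nat set set \<Rightarrow> nat set set \<Rightarrow> nat set set \<Rightarrow> nat \<Rightarrow> nat set set \<times> nat set set"
    and r :: "nat \<Rightarrow> nat"
  assumes "local_algorithm alg r"
    and "\<And>V E T1 T2. valid_instance V E T1 T2 \<Longrightarrow> valid_schedule 1 V E T1 T2 (alg V E T1 T2)"
  shows "(\<lambda>n. real (r n)) \<in> \<Omega>(\<lambda>n. real n)"
proof -
  have main: "16 * r n \<ge> n" if "n \<ge> 64" for n
  proof (rule ccontr)
    assume "\<not> 16 * r n \<ge> n"
    then have lt: "16 * r n < n" by simp
    define k where "k = n div 4"
    have d: "4 * k \<le> n" "n < 4 * k + 4" unfolding k_def by linarith+
    define m where "m = k - 1"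
    define h where "h = 2 * m + 2"
    have hn: "2 * h \<le> n" unfolding h_def m_def using that d by arith
    have rm: "2 * r n + 2 \<le> m" unfolding m_def using that lt d by arith
    show False using key[OF assms h_def hn rm] .
  qed
  have "eventually (\<lambda>n. norm (real (r n)) \<ge> (1/16) * norm (real n)) at_top"
    unfolding eventually_at_top_linorder
  proof (intro exI allI impI)
    fix n :: nat assume "n \<ge> 64"
    then have "real n \<le> 16 * real (r n)" using main[of n] by linarith
    then show "norm (real (r n)) \<ge> (1/16) * norm (real n)" by simp
  qed
  then show ?thesis unfolding bigomega_def by (intro CollectI exI[of _ "1/16"]) simp
qed

end
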